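(* Let $x\in X$ with ${\cal E}_J(x)=\emptyset$. Then for every sequence $(x^{(k)})_{k\in\mathbb N}$ in $X$ converging to $x$ and every $i\in I$, $\rho_i(x^{(k)})\to\rho_i(x)$ (where, if $\rho_i(x)=-\infty$, this means $\rho_i(x^{(k)})=-\infty$ for all sufficiently large $k$). Equivalently, if $\rho=(\rho_i)_{i\in I}$ restricted to $X$ is not continuous at $x\in X$, then ${\cal E}_J(x)\ne\emptyset$.
   Context: $I$ is a finite set of players, $A_i$ finite nonempty action sets, $A=\prod_iA_i$, $r_i:A\to(0,1]$, $p:A\to[0,1]$. Let $\Xi=\prod_i\Delta(A_i)$; for $x\in\Xi$, $p(x)=\sum_ap(a)\prod_jx_j(a_j)$ and, if $p(x)>0$, $r_i(x)=\sum_ar_i(a)p(a)\prod_jx_j(a_j)/p(x)$ (also applied to partially pure profiles). $X:=\{x\in\Xi:p(x)=0\}$ is the set of nonabsorbing mixed action profiles. $\rho_i(x):=\max\{r_i(a_i,x_{-i}):a_i\in A_i,\ p(a_i,x_{-i})>0\}$, with $\max\emptyset=-\infty$ (so $\rho_i$ takes values in $\{-\infty\}\cup(0,1]$). For $x\in X$, a pair $(J,a_J)$ with $\emptyset\ne J\subseteq I$, $a_J\in\prod_{i\in J}A_i$ is an exit at $x$ if $p(a_J,x_{-J})>0$ and $p(a_{J'},x_{-J'})=0$ for every proper subset $J'\subsetneq J$; it is a joint exit if $|J|\ge2$; ${\cal E}_J(x)$ is the set of joint exits at $x$. *)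

theory Defs
  imports "HOL-Analysis.Analysis"
begin

definition mixed_profiles :: "'i set \<Rightarrow> ('i \<Rightarrow> 'a set) \<Rightarrow> ('i \<Rightarrow> 'a \<Rightarrow> real) set" where
  "mixed_profiles I A = {x. \<forall>i\<in>I. (\<forall>b\<in>A i. 0 \<le> x i b) \<and> (\<Sum>b\<in>A i. x i b) = 1}"

definition pure_upd :: "('i \<Rightarrow> 'a \<Rightarrow> real) \<Rightarrow> 'i set \<Rightarrow> ('i \<Rightarrow> 'a) \<Rightarrow> ('i \<Rightarrow> 'a \<Rightarrow> real)" where
  "pure_upd x J aJ = (\<lambda>j. if j \<in> J then (\<lambda>b. if b = aJ j then 1 else 0) else x j)"

definition pval :: "'i set \<Rightarrow> ('i \<Rightarrow> 'a set) \<Rightarrow> (('i \<Rightarrow> 'a) \<Rightarrow> real) \<Rightarrow> ('i \<Rightarrow> 'a \<Rightarrow> real) \<Rightarrow> real" where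
  "pval I A p x = (\<Sum>a\<in>PiE I A. p a * (\<Prod>j\<in>I. x j (a j)))"

text \<open>r_i(x), meaningful when p(x) > 0.\<close>
definition rval :: "'i set \<Rightarrow> ('i \<Rightarrow> 'a set) \<Rightarrow> (('i \<Rightarrow> 'a) \<Rightarrow> real) \<Rightarrow> ('i \<Rightarrow> ('i \<Rightarrow> 'a) \<Rightarrow> real)
     \<Rightarrow> 'i \<Rightarrow> ('i \<Rightarrow> 'a \<Rightarrow> real) \<Rightarrow> real" where
  "rval I A p r i x = (\<Sum>a\<in>PiE I A. r i a * p a * (\<Prod>j\<in>I. x j (a j))) / pval I A p x"

definition nonabs :: "'i set \<Rightarrow> ('i \<Rightarrow> 'a set) \<Rightarrow> (('i \<Rightarrow> 'a) \<Rightarrow> real) \<Rightarrow> ('i \<Rightarrow> 'a \<Rightarrow> real) set" where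
  "nonabs I A p = {x \<in> mixed_profiles I A. pval I A p x = 0}"

text \<open>rho_i(x) = max { r_i(a_i, x_{-i}) : a_i in A_i, p(a_i, x_{-i}) > 0 }, with max of the
empty set = -infinity (the supremum in ereal of a finite set is its maximum, and Sup {} = -\<infinity>).\<close>
definition rho :: "'i set \<Rightarrow> ('i \<Rightarrow> 'a set) \<Rightarrow> (('i \<Rightarrow> 'a) \<Rightarrow> real) \<Rightarrow> ('i \<Rightarrow> ('i \<Rightarrow> 'a) \<Rightarrow> real)
     \<Rightarrow> 'i \<Rightarrow> ('i \<Rightarrow> 'a \<Rightarrow> real) \<Rightarrow> ereal" where
  "rho I A p r i x =
     (SUP b \<in> {b \<in> A i. pval I A p (pure_upd x {i} (\<lambda>_. b)) > 0}.
        ereal (rval I A p r i (pure_upd x {i} (\<lambda>_. b))))"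

definition is_exit :: "'i set \<Rightarrow> ('i \<Rightarrow> 'a set) \<Rightarrow> (('i \<Rightarrow> 'a) \<Rightarrow> real) \<Rightarrow> ('i \<Rightarrow> 'a \<Rightarrow> real)
     \<Rightarrow> 'i set \<Rightarrow> ('i \<Rightarrow> 'a) \<Rightarrow> bool" where
  "is_exit I A p x J aJ \<longleftrightarrow> J \<noteq> {} \<and> J \<subseteq> I \<and> aJ \<in> PiE J A \<and>
     pval I A p (pure_upd x J aJ) > 0 \<and>
     (\<forall>J'. J' \<subset> J \<longrightarrow> pval I A p (pure_upd x J' aJ) = 0)"

definition joint_exits :: "'i set \<Rightarrow> ('i \<Rightarrow> 'a set) \<Rightarrow> (('i \<Rightarrow> 'a) \<Rightarrow> real) \<Rightarrow> ('i \<Rightarrow> 'a \<Rightarrow> real)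
     \<Rightarrow> ('i set \<times> ('i \<Rightarrow> 'a)) set" where
  "joint_exits I A p x = {(J, aJ). is_exit I A p x J aJ \<and> card J \<ge> 2}"

end

theory Submission
  imports Defs
begin

lemma pval_nonneg:
  assumes "finite I" "\<And>j. j\<in>I \<Longrightarrow> finite (A j)" "\<And>a. a\<in>PiE I A \<Longrightarrow> 0 \<le> p a"
    "\<And>j c. j\<in>I \<Longrightarrow> c\<in>A j \<Longrightarrow> 0 \<le> y j c"
  shows "0 \<le> pval I A p y"
  unfolding pval_def using assms
  by (intro sum_nonneg mult_nonneg_nonneg prod_nonneg) (auto simp: PiE_iff)

lemma pval_pos_iff:
  assumes "finite I" "\<And>j. j\<in>I \<Longrightarrow> finite (A j)" "\<And>a. a\<in>PiE I A \<Longrightarrow> 0 \<le> p a"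
    "\<And>j c. j\<in>I \<Longrightarrow> c\<in>A j \<Longrightarrow> 0 \<le> y j c"
  shows "pval I A p y > 0 \<longleftrightarrow> (\<exists>a\<in>PiE I A. p a > 0 \<and> (\<forall>j\<in>I. y j (a j) > 0))"
proof -
  have nn: "\<And>a. a \<in> PiE I A \<Longrightarrow> 0 \<le> p a * (\<Prod>j\<in>I. y j (a j))"
    using assms by (intro mult_nonneg_nonneg prod_nonneg) (auto simp: PiE_iff)
  have fin: "finite (PiE I A)" using assms by (intro finite_PiE) auto
  have "pval I A p y > 0 \<longleftrightarrow> (\<exists>a\<in>PiE I A. p a * (\<Prod>j\<in>I. y j (a j)) > 0)"
  proof
    assume "pval I A p y > 0"
    then have "pval I A p y \<noteq> 0" by simp
    then have "\<not> (\<forall>a\<in>PiE I A. p a * (\<Prod>j\<in>I. y j (a j)) = 0)"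
      unfolding pval_def using sum_nonneg_eq_0_iff[OF fin nn] by simp
    then obtain a where a: "a \<in> PiE I A" and ne: "p a * (\<Prod>j\<in>I. y j (a j)) \<noteq> 0"
      by blast
    have "p a * (\<Prod>j\<in>I. y j (a j)) > 0" using nn[OF a] ne by linarith
    then show "\<exists>a\<in>PiE I A. p a * (\<Prod>j\<in>I. y j (a j)) > 0" using a by blast
  next
    assume "\<exists>a\<in>PiE I A. p a * (\<Prod>j\<in>I. y j (a j)) > 0"
    then obtain a where a: "a \<in> PiE I A" "p a * (\<Prod>j\<in>I. y j (a j)) > 0" by auto
    have "p a * (\<Prod>j\<in>I. y j (a j)) \<le> pval I A p y"
      unfolding pval_def using nn fin a by (intro member_le_sum) auto
    then show "pval I A p y > 0" using a by simp
  qed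
  also have "\<dots> \<longleftrightarrow> (\<exists>a\<in>PiE I A. p a > 0 \<and> (\<forall>j\<in>I. y j (a j) > 0))"
  proof (intro bex_cong refl)
    fix a assume a: "a \<in> PiE I A"
    have pn: "0 \<le> (\<Prod>j\<in>I. y j (a j))" using assms a by (intro prod_nonneg) (auto simp: PiE_iff)
    have "(\<Prod>j\<in>I. y j (a j)) > 0 \<longleftrightarrow> (\<forall>j\<in>I. y j (a j) > 0)"
    proof
      assume h: "(\<Prod>j\<in>I. y j (a j)) > 0"
      have "\<forall>j\<in>I. y j (a j) \<noteq> 0"
      proof (intro ballI notI)
        fix j assume "j \<in> I" "y j (a j) = 0"
        then have "(\<Prod>j\<in>I. y j (a j)) = 0" using assms(1) by (intro prod_zero) auto
        with h show False by simp
      qed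
      then show "\<forall>j\<in>I. y j (a j) > 0" using assms a by (force simp: PiE_iff order_less_le)
    qed (intro prod_pos, auto)
    then show "p a * (\<Prod>j\<in>I. y j (a j)) > 0 \<longleftrightarrow> p a > 0 \<and> (\<forall>j\<in>I. y j (a j) > 0)"
      using pn assms(3)[OF a] by (smt (verit) mult_pos_pos mult_nonneg_nonneg zero_less_mult_iff)
  qed
  finally show ?thesis .
qed

lemma pure_upd_nonneg:
  assumes "\<And>j c. j\<in>I \<Longrightarrow> c\<in>A j \<Longrightarrow> 0 \<le> y j c"
  shows "\<And>j c. j\<in>I \<Longrightarrow> c\<in>A j \<Longrightarrow> 0 \<le> pure_upd y J aJ j c"
  using assms by (auto simp: pure_upd_def)

lemma pval_upd_pos_iff:
  assumes "finite I" "\<And>j. j\<in>I \<Longrightarrow> finite (A j)" "\<And>a. a\<in>PiE I A \<Longrightarrow> 0 \<le> p a"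
    "\<And>j c. j\<in>I \<Longrightarrow> c\<in>A j \<Longrightarrow> 0 \<le> y j c"
  shows "pval I A p (pure_upd y J aJ) > 0 \<longleftrightarrow>
    (\<exists>a\<in>PiE I A. p a > 0 \<and> (\<forall>j\<in>I. if j \<in> J then a j = aJ j else y j (a j) > 0))"
  apply (subst pval_pos_iff[OF assms(1-3) pure_upd_nonneg[OF assms(4)]])
   apply assumption+
  apply (intro bex_cong refl conj_cong ball_cong)
  apply (auto simp: pure_upd_def)
  done

lemma pval_tendsto:
  assumes "\<And>j c. j \<in> I \<Longrightarrow> c \<in> A j \<Longrightarrow> (\<lambda>k. xs k j c) \<longlonglongrightarrow> x j c"
  shows "(\<lambda>k. pval I A q (pure_upd (xs k) J aJ)) \<longlonglongrightarrow> pval I A q (pure_upd x J aJ)"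
  unfolding pval_def
proof (intro tendsto_sum tendsto_mult tendsto_const tendsto_prod)
  fix a j assume "a \<in> PiE I A" "j \<in> I"
  then have "a j \<in> A j" by (auto simp: PiE_iff)
  then show "(\<lambda>k. pure_upd (xs k) J aJ j (a j)) \<longlonglongrightarrow> pure_upd x J aJ j (a j)"
    using assms[OF \<open>j \<in> I\<close>] by (cases "j \<in> J") (auto simp: pure_upd_def)
qed

lemma SUP_tendsto_finite:
  fixes g :: "nat \<Rightarrow> 'b \<Rightarrow> ereal"
  assumes "finite S" "\<And>b. b \<in> S \<Longrightarrow> (\<lambda>k. g k b) \<longlonglongrightarrow> h b"
  shows "(\<lambda>k. SUP b\<in>S. g k b) \<longlonglongrightarrow> (SUP b\<in>S. h b)"
  using assms
proof (induction S rule: finite_induct)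
  case empty
  then show ?case by simp
next
  case (insert b S)
  then show ?case by (simp add: sup_max tendsto_max)
qed

lemma pure_upd_restrict:
  "J' \<subseteq> J0 \<Longrightarrow> pure_upd x J' (restrict a J0) = pure_upd x J' a"
  by (auto simp: pure_upd_def fun_eq_iff)

theorem mainTheorem7:
  fixes I :: "'i set" and A :: "'i \<Rightarrow> 'a set"
    and r :: "'i \<Rightarrow> ('i \<Rightarrow> 'a) \<Rightarrow> real" and p :: "('i \<Rightarrow> 'a) \<Rightarrow> real"
    and x :: "'i \<Rightarrow> 'a \<Rightarrow> real" and xs :: "nat \<Rightarrow> 'i \<Rightarrow> 'a \<Rightarrow> real"
  assumes finI: "finite I"
    and finA: "\<And>i. i \<in> I \<Longrightarrow> finite (A i)"
    and neA: "\<And>i. i \<in> I \<Longrightarrow> A i \<noteq> {}"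
    and r_range: "\<And>i a. i \<in> I \<Longrightarrow> a \<in> PiE I A \<Longrightarrow> 0 < r i a \<and> r i a \<le> 1"
    and p_range: "\<And>a. a \<in> PiE I A \<Longrightarrow> 0 \<le> p a \<and> p a \<le> 1"
    and xX: "x \<in> nonabs I A p"
    and noJ: "joint_exits I A p x = {}"
    and xsX: "\<And>k. xs k \<in> nonabs I A p"
    and conv: "\<And>i b. i \<in> I \<Longrightarrow> b \<in> A i \<Longrightarrow> (\<lambda>k. xs k i b) \<longlonglongrightarrow> x i b"
    and iI: "i \<in> I"
  shows "(rho I A p r i x = -\<infinity> \<longrightarrow> (\<forall>\<^sub>F k in sequentially. rho I A p r i (xs k) = -\<infinity>))
       \<and> ((\<lambda>k. rho I A p r i (xs k)) \<longlonglongrightarrow> rho I A p r i x)"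
proof -
  have pnn: "\<And>a. a\<in>PiE I A \<Longrightarrow> 0 \<le> p a" using p_range by auto
  have nnx: "\<And>j c. j\<in>I \<Longrightarrow> c\<in>A j \<Longrightarrow> 0 \<le> x j c"
    using xX by (auto simp: nonabs_def mixed_profiles_def)
  have nnxs: "\<And>j c. j\<in>I \<Longrightarrow> c\<in>A j \<Longrightarrow> 0 \<le> xs k j c" for k
    using xsX[of k] by (auto simp: nonabs_def mixed_profiles_def)
  have px0: "pval I A p x = 0" using xX by (auto simp: nonabs_def)
  have pxs0: "pval I A p (xs k) = 0" for k using xsX[of k] by (auto simp: nonabs_def)
  have upd_iff_x: "pval I A p (pure_upd x J aJ) > 0 \<longleftrightarrow>
    (\<exists>a\<in>PiE I A. p a > 0 \<and> (\<forall>j\<in>I. if j \<in> J then a j = aJ j else x j (a j) > 0))" for J aJ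
    by (rule pval_upd_pos_iff[OF finI finA pnn nnx])
  have upd_iff_xs: "pval I A p (pure_upd (xs k) J aJ) > 0 \<longleftrightarrow>
    (\<exists>a\<in>PiE I A. p a > 0 \<and> (\<forall>j\<in>I. if j \<in> J then a j = aJ j else xs k j (a j) > 0))" for k J aJ
    by (rule pval_upd_pos_iff[OF finI finA pnn nnxs])
  have pos_iff_xs: "pval I A p (xs k) > 0 \<longleftrightarrow>
    (\<exists>a\<in>PiE I A. p a > 0 \<and> (\<forall>j\<in>I. xs k j (a j) > 0))" for k
    by (rule pval_pos_iff[OF finI finA pnn nnxs])
  have nn_upd_x: "0 \<le> pval I A p (pure_upd x J aJ)" for J aJ
    by (rule pval_nonneg[OF finI finA pnn pure_upd_nonneg[OF nnx]])
  define B where "B y = {b\<in>A i. pval I A p (pure_upd y {i} (\<lambda>_. b)) > 0}" for y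
  define f where "f y b = ereal (rval I A p r i (pure_upd y {i} (\<lambda>_. b)))" for y b
  have rho_eq: "rho I A p r i y = (SUP b\<in>B y. f y b)" for y
    by (simp add: rho_def B_def f_def)
  have finB: "finite (B y)" for y using finA[OF iI] by (simp add: B_def)
  have ev1: "eventually (\<lambda>k. pval I A p (pure_upd (xs k) J aJ) > 0) sequentially"
    if h: "pval I A p (pure_upd x J aJ) > 0" for J aJ
  proof -
    from h obtain a where a: "a \<in> PiE I A" "p a > 0"
      "\<forall>j\<in>I. if j \<in> J then a j = aJ j else x j (a j) > 0" using upd_iff_x by blast
    have "\<forall>j\<in>I. eventually (\<lambda>k. if j \<in> J then a j = aJ j else xs k j (a j) > 0) sequentially"
    proof
      fix j assume j: "j \<in> I"
      show "eventually (\<lambda>k. if j \<in> J then a j = aJ j else xs k j (a j) > 0) sequentially"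
      proof (cases "j \<in> J")
        case True then show ?thesis using a(3) j by simp
      next
        case False
        then have "x j (a j) > 0" using a(3) j by auto
        moreover have "a j \<in> A j" using a(1) j by (auto simp: PiE_iff)
        ultimately have "eventually (\<lambda>k. xs k j (a j) > 0) sequentially"
          using conv[OF j] order_tendstoD(1) by blast
        then show ?thesis using False by simp
      qed
    qed
    then have "eventually (\<lambda>k. \<forall>j\<in>I. if j \<in> J then a j = aJ j else xs k j (a j) > 0) sequentially"
      by (rule eventually_ball_finite[OF finI])
    then show ?thesis
      by (rule eventually_mono) (use a upd_iff_xs in blast)
  qed
  define E where "E = {e. fst e \<in> I \<and> snd e \<in> A (fst e) \<and>
      pval I A p (pure_upd x {fst e} (\<lambda>_. snd e)) > 0}"
  have finE: "finite E"
  proof (rule finite_subset)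
    show "E \<subseteq> Sigma I A" by (auto simp: E_def)
    show "finite (Sigma I A)" using finI finA by (intro finite_SigmaI) auto
  qed
  have evE: "eventually (\<lambda>k. \<forall>e\<in>E. pval I A p (pure_upd (xs k) {fst e} (\<lambda>_. snd e)) > 0) sequentially"
    by (rule eventually_ball_finite[OF finE]) (auto simp: E_def intro: ev1)
  have evsub: "eventually (\<lambda>k. \<forall>b\<in>B x. b \<in> B (xs k)) sequentially"
    by (rule eventually_ball_finite[OF finB]) (auto simp: B_def intro: ev1)
  have key: "B (xs k) \<subseteq> B x"
    if hk: "\<forall>e\<in>E. pval I A p (pure_upd (xs k) {fst e} (\<lambda>_. snd e)) > 0" for k
  proof
    fix b assume b: "b \<in> B (xs k)"
    show "b \<in> B x"
    proof (rule ccontr)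
      assume nb: "b \<notin> B x"
      from b obtain a where a: "a \<in> PiE I A" "p a > 0"
        "\<forall>j\<in>I. if j \<in> {i} then a j = b else xs k j (a j) > 0"
        using b upd_iff_xs[of k "{i}" "\<lambda>_. b"] unfolding B_def by auto
      have ai: "a i = b" using a(3) iI by auto
      define J where "J = insert i {j\<in>I. x j (a j) = 0}"
      have JI: "J \<subseteq> I" using iI by (auto simp: J_def)
      have PJ: "pval I A p (pure_upd x J a) > 0"
        unfolding upd_iff_x
      proof (intro bexI[of _ a] conjI ballI)
        fix j assume j: "j \<in> I"
        have "a j \<in> A j" using a(1) j by (auto simp: PiE_iff)
        then show "if j \<in> J then a j = a j else x j (a j) > 0"
          using nnx[OF j] j by (auto simp: J_def order_less_le)
      qed (use a in auto)
      obtain J0 where J0: "J0 \<subseteq> J \<and> pval I A p (pure_upd x J0 a) > 0"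
        and mn: "\<forall>J'. J' \<subseteq> J \<and> pval I A p (pure_upd x J' a) > 0 \<longrightarrow> card J0 \<le> card J'"
        using ex_has_least_nat[of "\<lambda>J'. J' \<subseteq> J \<and> pval I A p (pure_upd x J' a) > 0" J card] PJ
        by blast
      have J0I: "J0 \<subseteq> I" using J0 JI by auto
      have finJ0: "finite J0" using J0I finI finite_subset by blast
      have "pure_upd x {} a = x" by (simp add: pure_upd_def)
      then have J0ne: "J0 \<noteq> {}" using J0 px0 by auto
      have "is_exit I A p x J0 (restrict a J0)"
        unfolding is_exit_def
      proof (intro conjI allI impI)
        show "J0 \<noteq> {}" "J0 \<subseteq> I" by (fact J0ne, fact J0I)
        show "restrict a J0 \<in> PiE J0 A" using a(1) J0I by (auto simp: PiE_iff)
        show "pval I A p (pure_upd x J0 (restrict a J0)) > 0"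
          using J0 pure_upd_restrict[of J0 J0 x a] by simp
        fix J' assume J': "J' \<subset> J0"
        then have "card J' < card J0" using finJ0 psubset_card_mono by blast
        have J'J: "J' \<subseteq> J" using J' J0 by auto
        have "\<not> pval I A p (pure_upd x J' a) > 0"
        proof
          assume h: "pval I A p (pure_upd x J' a) > 0"
          have "card J0 \<le> card J'" using mn J'J h by blast
          with \<open>card J' < card J0\<close> show False by simp
        qed
        then show "pval I A p (pure_upd x J' (restrict a J0)) = 0"
          using nn_upd_x[of J' a] pure_upd_restrict[of J' J0 x a] J' by auto
      qed
      then have "card J0 < 2" using noJ by (auto simp: joint_exits_def)
      moreover have "card J0 \<noteq> 0" using J0ne finJ0 by simp
      ultimately have "card J0 = 1" by linarith
      then obtain j where J0j: "J0 = {j}" by (rule card_1_singletonE)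
      have jJ: "j \<in> J" using J0 J0j by auto
      have jI: "j \<in> I" using jJ JI by auto
      show False
      proof (cases "j = i")
        case True
        have "pure_upd x {i} a = pure_upd x {i} (\<lambda>_. b)"
          using ai by (auto simp: pure_upd_def fun_eq_iff)
        moreover have "b \<in> A i" using a(1) ai iI by (auto simp: PiE_iff)
        ultimately have "b \<in> B x" using J0 J0j True by (simp add: B_def)
        with nb show False by simp
      next
        case False
        have aj: "a j \<in> A j" using a(1) jI by (auto simp: PiE_iff)
        have "pure_upd x {j} a = pure_upd x {j} (\<lambda>_. a j)"
          by (auto simp: pure_upd_def fun_eq_iff)
        then have "(j, a j) \<in> E" using J0 J0j jI aj by (simp add: E_def)
        with hk have "pval I A p (pure_upd (xs k) {j} (\<lambda>_. a j)) > 0" by force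
        then obtain a' where a': "a' \<in> PiE I A" "p a' > 0"
          "\<forall>l\<in>I. if l \<in> {j} then a' l = a j else xs k l (a' l) > 0"
          using upd_iff_xs[of k "{j}" "\<lambda>_. a j"] by auto
        have xj: "xs k j (a j) > 0" using a(3) jI False by auto
        have "\<forall>l\<in>I. xs k l (a' l) > 0"
        proof
          fix l assume "l \<in> I"
          then show "xs k l (a' l) > 0" using a'(3) xj by (cases "l = j") auto
        qed
        then have "pval I A p (xs k) > 0" using pos_iff_xs[of k] a' by blast
        with pxs0 show False by simp
      qed
    qed
  qed
  have evB: "eventually (\<lambda>k. B (xs k) = B x) sequentially"
    using evsub evE by eventually_elim (use key in blast)
  have conv_f: "(\<lambda>k. f (xs k) b) \<longlonglongrightarrow> f x b" if b: "b \<in> B x" for b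
  proof -
    have rv: "rval I A p r i y = pval I A (\<lambda>a. r i a * p a) y / pval I A p y" for y
      by (simp add: rval_def pval_def mult.assoc)
    have "(\<lambda>k. rval I A p r i (pure_upd (xs k) {i} (\<lambda>_. b))) \<longlonglongrightarrow> rval I A p r i (pure_upd x {i} (\<lambda>_. b))"
      unfolding rv using b
      by (intro tendsto_divide pval_tendsto conv) (auto simp: B_def)
    then show ?thesis unfolding f_def by simp
  qed
  have lim: "(\<lambda>k. SUP b\<in>B x. f (xs k) b) \<longlonglongrightarrow> (SUP b\<in>B x. f x b)"
    by (rule SUP_tendsto_finite[OF finB conv_f])
  have part2: "(\<lambda>k. rho I A p r i (xs k)) \<longlonglongrightarrow> rho I A p r i x"
    unfolding rho_eq
    using lim tendsto_cong[of "\<lambda>k. SUP b\<in>B x. f (xs k) b" "\<lambda>k. SUP b\<in>B (xs k). f (xs k) b"]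
      evB by (smt (verit, del_insts) eventually_mono)
  have part1: "\<forall>\<^sub>F k in sequentially. rho I A p r i (xs k) = -\<infinity>"
    if h: "rho I A p r i x = -\<infinity>"
  proof -
    have "B x = {}"
    proof (rule ccontr)
      assume "B x \<noteq> {}"
      then obtain b where "b \<in> B x" by blast
      then have "f x b \<le> rho I A p r i x" unfolding rho_eq by (rule SUP_upper)
      then show False using h by (simp add: f_def)
    qed
    then show ?thesis using evB
      by (rule_tac eventually_mono[OF evB]) (simp add: rho_eq bot_ereal_def)
  qed
  show ?thesis using part1 part2 by blast
qed

end
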